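(* Let $\theta\in(\pi,2\pi)$. Then for all $x,y\in S_\theta$, $s_{S_\theta}(x,y)\le\sqrt2\sin(\theta/4)\,p_{S_\theta}(x,y)$, and the constant $\sqrt2\sin(\theta/4)$ is sharp.
   Context: $S_\theta=\{x\in\mathbb{C}:0<\arg(x)<\theta\}$. For a domain $G\subsetneq\mathbb{C}$, $d_G(x)=\inf\{|x-z|:z\in\partial G\}$, $s_G(x,y)=\frac{|x-y|}{\inf_{z\in\partial G}(|x-z|+|z-y|)}$, $p_G(x,y)=\frac{|x-y|}{\sqrt{|x-y|^2+4d_G(x)d_G(y)}}$. *)

theory Defs
  imports "HOL-Analysis.Analysis"
begin

definition sector :: "real \<Rightarrow> complex set" where
  "sector \<theta> = {x. 0 < Arg2pi x \<and> Arg2pi x < \<theta>}"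

definition dG :: "complex set \<Rightarrow> complex \<Rightarrow> real" where
  "dG G x = Inf {cmod (x - z) | z. z \<in> frontier G}"

definition sG :: "complex set \<Rightarrow> complex \<Rightarrow> complex \<Rightarrow> real" where
  "sG G x y = cmod (x - y) / Inf {cmod (x - z) + cmod (z - y) | z. z \<in> frontier G}"

definition pG :: "complex set \<Rightarrow> complex \<Rightarrow> complex \<Rightarrow> real" where
  "pG G x y = cmod (x - y) / sqrt ((cmod (x - y))\<^sup>2 + 4 * dG G x * dG G y)"

end

theory Submission imports Defs begin

definition inC :: "real \<Rightarrow> complex \<Rightarrow> bool" where
  "inC t x \<longleftrightarrow> Im x \<le> 0 \<and> 0 \<le> cos t * Im x - sin t * Re x"

lemma sector_iff:
  assumes "pi < t" "t < 2*pi"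
  shows "x \<in> sector t \<longleftrightarrow> \<not> inC t x"
proof (cases "x = 0")
  case True then show ?thesis by (simp add: sector_def inC_def)
next
  case False
  define a where "a = Arg2pi x"
  define r where "r = cmod x"
  have r: "r > 0" using False r_def by simp
  have a: "0 \<le> a" "a < 2*pi" using Arg2pi[of x] a_def by auto
  have re: "Re x = r * cos a" and im: "Im x = r * sin a"
    using cos_Arg2pi[of x] sin_Arg2pi[of x] a_def r_def by auto
  have l: "cos t * Im x - sin t * Re x = r * sin (a - t)"
    by (simp add: re im sin_diff algebra_simps)
  have st: "sin t < 0" using sin_lt_zero assms by auto
  have "inC t x \<longleftrightarrow> r * sin a \<le> 0 \<and> 0 \<le> r * sin (a - t)"
    unfolding inC_def l unfolding im by (rule refl)
  also have "\<dots> \<longleftrightarrow> sin a \<le> 0 \<and> 0 \<le> sin (a - t)"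
    using r by (simp add: mult_le_0_iff zero_le_mult_iff)
  also have "\<dots> \<longleftrightarrow> \<not> (0 < a \<and> a < t)"
  proof
    assume h: "sin a \<le> 0 \<and> 0 \<le> sin (a - t)"
    show "\<not> (0 < a \<and> a < t)"
    proof
      assume h2: "0 < a \<and> a < t"
      have "\<not> a < pi" using sin_gt_zero[of a] h h2 by auto
      then have "0 < sin (t - a)" using sin_gt_zero[of "t - a"] h2 assms by auto
      then have "sin (a - t) < 0" by (metis minus_diff_eq sin_minus neg_less_0_iff_less)
      then show False using h by auto
    qed
  next
    assume h: "\<not> (0 < a \<and> a < t)"
    show "sin a \<le> 0 \<and> 0 \<le> sin (a - t)"
    proof (cases "a = 0")
      case True then show ?thesis using st by simp
    next
      case False
      then have "t \<le> a" using h a by auto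
      then show ?thesis using sin_le_zero[of a] sin_ge_zero[of "a - t"] a assms by auto
    qed
  qed
  finally show ?thesis unfolding sector_def a_def by blast
qed

lemma inC_add: "inC t a \<Longrightarrow> inC t b \<Longrightarrow> inC t (a + b)"
  unfolding inC_def by (simp add: algebra_simps)

lemma closed_inC: "closed {x. inC t x}"
  unfolding inC_def by (intro closed_Collect_conj closed_Collect_le continuous_intros)

lemma open_sector:
  assumes "pi < t" "t < 2*pi"
  shows "open (sector t)"
proof -
  have "sector t = - {x. inC t x}" using sector_iff[OF assms] by auto
  then show ?thesis using closed_inC by (simp add: open_Compl)
qed

lemma frontier_inC:
  assumes "pi < t" "t < 2*pi" "z \<in> frontier (sector t)"
  shows "inC t z"
proof -
  have "z \<notin> sector t" using assms(3) open_sector[OF assms(1,2)]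
    by (simp add: frontier_def interior_open)
  then show ?thesis using sector_iff[OF assms(1,2)] by blast
qed

lemma dG_le:
  fixes S :: "complex set"
  assumes "x \<in> S" "c \<notin> S"
  shows "dG S x \<le> cmod (x - c)"
proof -
  have "closed_segment x c \<inter> frontier S \<noteq> {}"
    by (rule connected_Int_frontier) (use assms in auto)
  then obtain w where w: "w \<in> closed_segment x c" "w \<in> frontier S" by blast
  have "dist w x \<le> dist x c" using dist_in_closed_segment[OF w(1)] by blast
  then have "cmod (x - w) \<le> cmod (x - c)" by (simp add: dist_norm norm_minus_commute)
  moreover have "dG S x \<le> cmod (x - w)"
    unfolding dG_def by (rule cInf_lower) (use w in \<open>auto intro!: bdd_belowI[of _ 0]\<close>)
  ultimately show ?thesis by linarith
qed

lemma dG_nonneg: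
  assumes "frontier S \<noteq> {}"
  shows "0 \<le> dG S x"
  unfolding dG_def by (rule cInf_greatest) (use assms in auto)

lemma zero_frontier:
  assumes "pi < t" "t < 2*pi"
  shows "0 \<in> frontier (sector t)"
proof -
  have "0 \<notin> sector t" by (simp add: sector_def)
  moreover have "0 \<in> closure (sector t)"
  proof (subst closure_approachable, intro allI impI)
    fix e :: real assume e: "e > 0"
    have "\<i> * of_real (e/2) \<in> sector t"
      using sector_iff[OF assms] e by (simp add: inC_def)
    moreover have "dist (\<i> * of_real (e/2)) 0 < e" using e by (simp add: norm_mult)
    ultimately show "\<exists>y\<in>sector t. dist y 0 < e" by blast
  qed
  ultimately show ?thesis using open_sector[OF assms] by (simp add: frontier_def interior_open)
qed

definition g :: "real \<Rightarrow> real \<Rightarrow> real" where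
  "g t a = (if a \<le> pi/2 then sin a else if t - a \<le> pi/2 then sin (t - a) else 1)"

lemma L_AA: "2 * sin (a::real) * sin b - cos (a - b) \<le> (1::real)"
proof -
  have "2 * sin a * sin b - cos (a - b) = - cos (a + b)" by (simp add: cos_diff cos_add)
  then show ?thesis using cos_ge_minus_one[of "a+b"] by linarith
qed

lemma L_AB:
  fixes t a b :: real
  assumes "cos (t/2) \<le> 0"
  shows "2 * sin a * sin b - cos (a + b - t) \<le> 1 - 2 * cos (t/2)"
proof -
  define X where "X = a + b - t/2"
  have e1: "a + b = X + t/2" and e2: "a + b - t = X - t/2" by (simp_all add: X_def)
  have "2 * sin a * sin b = cos (a - b) - cos (a + b)" by (simp add: cos_diff cos_add)
  also have "cos (a + b) = cos X * cos (t/2) - sin X * sin (t/2)" by (simp add: e1 cos_add)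
  finally have h: "2 * sin a * sin b - cos (a + b - t) = cos (a - b) - 2 * (cos X * cos (t/2))"
    by (simp add: e2 cos_diff)
  have "0 \<le> (1 - cos X) * (- cos (t/2))" using assms cos_le_one[of X] by (intro mult_nonneg_nonneg) auto
  then have "cos (t/2) \<le> cos X * cos (t/2)" by (simp add: algebra_simps)
  then show ?thesis unfolding h using cos_le_one[of "a - b"] by linarith
qed

lemma cos_t: "cos (t::real) = 2 * (cos (t/2))^2 - 1"
  using cos_double_cos[of "t/2"] by simp

lemma cs2: "(p*X + q*Y)^2 \<le> (p^2+q^2)*(X^2+Y^2::real)"
proof -
  have "0 \<le> (p*Y - q*X)^2" by simp
  then show ?thesis by (simp add: power2_eq_square algebra_simps)
qed

lemma L_AM:
  fixes t a b :: real
  assumes "cos (t/2) \<le> 0" "- cos t \<le> sin b"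
  shows "2 * sin a - cos (a - b) \<le> 1 - 2 * cos (t/2)"
proof -
  define c where "c = cos (t/2)"
  have cge: "-1 \<le> c" using cos_ge_minus_one c_def by simp
  have E: "2 * sin a - cos (a - b) = sin a * (2 - sin b) + cos a * (- cos b)"
    by (simp add: cos_diff algebra_simps)
  have cs: "(sin a * (2 - sin b) + cos a * (- cos b))^2 \<le> ((sin a)^2 + (cos a)^2) * ((2 - sin b)^2 + (- cos b)^2)"
    by (rule cs2)
  have s1: "(cos b)^2 = 1 - (sin b)^2" using sin_cos_squared_add[of b] by linarith
  have "((sin a)^2 + (cos a)^2) * ((2 - sin b)^2 + (- cos b)^2) = (2 - sin b)^2 + (cos b)^2"
    by simp
  also have "\<dots> = 5 - 4 * sin b" unfolding s1 by (simp add: power2_eq_square algebra_simps)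
  also have "\<dots> \<le> 5 + 4 * cos t" using assms(2) by simp
  also have "\<dots> = 1 + 8 * c^2" using cos_t[of t] unfolding c_def by linarith
  also have "\<dots> \<le> (1 - 2*c)^2"
  proof -
    have "0 \<le> (-c) * (1 + c)" by (intro mult_nonneg_nonneg) (use assms(1) cge c_def in linarith)+
    then show ?thesis by (simp add: power2_eq_square algebra_simps)
  qed
  finally have "(2 * sin a - cos (a - b))^2 \<le> (1 - 2*c)^2" using cs unfolding E by linarith
  then have "2 * sin a - cos (a - b) \<le> 1 - 2*c"
    by (rule power2_le_imp_le) (use assms(1) c_def in linarith)
  then show ?thesis unfolding c_def .
qed

lemma L_M:
  fixes t b :: real
  assumes "pi/2 \<le> b" "b \<le> t - pi/2" "t < 2*pi"
  shows "- cos t \<le> sin b"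
proof -
  have "cos (t - pi) \<le> cos (b - pi/2)" by (rule cos_monotone_0_pi_le) (use assms in auto)
  moreover have "cos (t - pi) = - cos t" by (simp add: cos_diff)
  moreover have "cos (b - pi/2) = sin b" by (simp add: cos_diff)
  ultimately show ?thesis by simp
qed

lemma L_MM:
  fixes t a b :: real
  assumes "pi/2 \<le> a" "a \<le> t - pi/2" "pi/2 \<le> b" "b \<le> t - pi/2" "t < 2*pi" "cos (t/2) \<le> 0"
  shows "2 - cos (a - b) \<le> 1 - 2 * cos (t/2)"
proof -
  define c where "c = cos (t/2)"
  have cge: "-1 \<le> c" using cos_ge_minus_one c_def by simp
  have "cos (t - pi) \<le> cos \<bar>a - b\<bar>" by (rule cos_monotone_0_pi_le) (use assms in auto)
  moreover have "cos \<bar>a - b\<bar> = cos (a - b)" using cos_minus[of "a-b"] by (simp add: abs_if)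
  moreover have "cos (t - pi) = 1 - 2 * c^2" using cos_t[of t] by (simp add: cos_diff c_def)
  moreover have "0 \<le> (-c) * (1 + c)" by (intro mult_nonneg_nonneg) (use assms cge c_def in linarith)+
  ultimately show ?thesis unfolding c_def[symmetric] by (simp add: power2_eq_square algebra_simps)
qed

lemma trig_main:
  assumes t: "pi < t" "t < 2*pi" and a: "0 < a" "a < t" and b: "0 < b" "b < t"
  shows "2 * g t a * g t b - cos (a - b) \<le> 1 - 2 * cos (t/2)"
proof -
  have c0: "cos (t/2) \<le> 0"
  proof -
    have "cos (t/2) \<le> cos (pi/2)" by (rule cos_monotone_0_pi_le) (use t in auto)
    then show ?thesis by simp
  qed
  have one: "1 \<le> 1 - 2 * cos (t/2)" using c0 by simp
  have sym: "cos (b - a) = cos (a - b)" by (metis cos_minus minus_diff_eq)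
  have e1: "a + (t - b) - t = a - b" "b + (t - a) - t = b - a" "(t - a) - (t - b) = b - a"
     "(t - b) - (t - a) = a - b" by simp_all
  consider (A) "a \<le> pi/2" | (B) "\<not> a \<le> pi/2" "t - a \<le> pi/2" | (M) "\<not> a \<le> pi/2" "\<not> t - a \<le> pi/2" by blast
  then show ?thesis
  proof cases
    case A
    then have ga: "g t a = sin a" by (simp add: g_def)
    consider (A) "b \<le> pi/2" | (B) "\<not> b \<le> pi/2" "t - b \<le> pi/2" | (M) "\<not> b \<le> pi/2" "\<not> t - b \<le> pi/2" by blast
    then show ?thesis
    proof cases
      case A2: A
      then have gb: "g t b = sin b" by (simp add: g_def)
      show ?thesis unfolding ga gb using L_AA[of a b] one by linarith
    next
      case B2: B
      then have gb: "g t b = sin (t - b)" by (simp add: g_def)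
      have "2 * sin a * sin (t - b) - cos (a + (t - b) - t) \<le> 1 - 2 * cos (t/2)" by (rule L_AB[OF c0])
      then show ?thesis unfolding ga gb e1 .
    next
      case M2: M
      then have gb: "g t b = 1" by (simp add: g_def)
      have "- cos t \<le> sin b" by (rule L_M) (use M2 t in linarith)+
      then have "2 * sin a - cos (a - b) \<le> 1 - 2 * cos (t/2)" by (rule L_AM[OF c0])
      then show ?thesis unfolding ga gb by linarith
    qed
  next
    case B
    then have ga: "g t a = sin (t - a)" by (simp add: g_def)
    consider (A) "b \<le> pi/2" | (B) "\<not> b \<le> pi/2" "t - b \<le> pi/2" | (M) "\<not> b \<le> pi/2" "\<not> t - b \<le> pi/2" by blast
    then show ?thesis
    proof cases
      case A2: A
      then have gb: "g t b = sin b" by (simp add: g_def)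
      have "2 * sin b * sin (t - a) - cos (b + (t - a) - t) \<le> 1 - 2 * cos (t/2)" by (rule L_AB[OF c0])
      moreover have "sin b * sin (t - a) = sin (t - a) * sin b" by (rule mult.commute)
      ultimately show ?thesis unfolding ga gb e1 sym by linarith
    next
      case B2: B
      then have gb: "g t b = sin (t - b)" by (simp add: g_def)
      have "2 * sin (t - a) * sin (t - b) - cos ((t - a) - (t - b)) \<le> 1" by (rule L_AA)
      then show ?thesis unfolding ga gb e1 sym using one by linarith
    next
      case M2: M
      then have gb: "g t b = 1" by (simp add: g_def)
      have "- cos t \<le> sin (t - b)" by (rule L_M) (use M2 t in linarith)+
      then have "2 * sin (t - a) - cos ((t - a) - (t - b)) \<le> 1 - 2 * cos (t/2)" by (rule L_AM[OF c0])
      then show ?thesis unfolding ga gb e1 sym by linarith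
    qed
  next
    case M
    then have ga: "g t a = 1" by (simp add: g_def)
    consider (A) "b \<le> pi/2" | (B) "\<not> b \<le> pi/2" "t - b \<le> pi/2" | (M) "\<not> b \<le> pi/2" "\<not> t - b \<le> pi/2" by blast
    then show ?thesis
    proof cases
      case A2: A
      then have gb: "g t b = sin b" by (simp add: g_def)
      have "- cos t \<le> sin a" by (rule L_M) (use M t in linarith)+
      then have "2 * sin b - cos (b - a) \<le> 1 - 2 * cos (t/2)" by (rule L_AM[OF c0])
      then show ?thesis unfolding ga gb sym by linarith
    next
      case B2: B
      then have gb: "g t b = sin (t - b)" by (simp add: g_def)
      have "- cos t \<le> sin (t - a)" by (rule L_M) (use M t in linarith)+
      then have "2 * sin (t - b) - cos ((t - b) - (t - a)) \<le> 1 - 2 * cos (t/2)" by (rule L_AM[OF c0])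
      then show ?thesis unfolding ga gb e1 by linarith
    next
      case M2: M
      then have gb: "g t b = 1" by (simp add: g_def)
      have "2 - cos (a - b) \<le> 1 - 2 * cos (t/2)" by (rule L_MM) (use M M2 t c0 in linarith)+
      then show ?thesis unfolding ga gb by linarith
    qed
  qed
qed


lemma polar:
  assumes "u \<noteq> 0"
  shows "Re u = cmod u * cos (Arg2pi u)" "Im u = cmod u * sin (Arg2pi u)"
  using cos_Arg2pi[of u] sin_Arg2pi[of u] by auto

lemma alg1: "r * ca - r * (C * ca + S * sa) * C - r * (S * ca - C * sa) * S
   = r * ca * (1 - (C * C + S * S::real))"
  by (simp add: algebra_simps)

lemma alg2: "r * sa - r * (C * ca + S * sa) * S + r * (S * ca - C * sa) * C
   = r * sa * (1 - (C * C + S * S::real))"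
  by (simp add: algebra_simps)

lemma dG_bound:
  assumes t: "pi < t" "t < 2*pi" and x: "x \<in> sector t" and z: "inC t z"
  shows "0 < Arg2pi (x - z) \<and> Arg2pi (x - z) < t \<and>
         dG (sector t) x \<le> cmod (x - z) * g t (Arg2pi (x - z))"
proof -
  define u where "u = x - z"
  define a where "a = Arg2pi u"
  define r where "r = cmod u"
  have nx: "\<not> inC t x" using x sector_iff[OF t] by blast
  have nu: "\<not> inC t u"
  proof
    assume "inC t u"
    then have "inC t (z + u)" using inC_add z by blast
    then show False using nx u_def by simp
  qed
  then have us: "u \<in> sector t" using sector_iff[OF t] by blast
  then have a: "0 < a" "a < t" using a_def sector_def by auto
  have u0: "u \<noteq> 0" using a a_def by auto
  have re: "Re u = r * cos a" and im: "Im u = r * sin a" using polar[OF u0] a_def r_def by auto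
  have r0: "r > 0" using u0 r_def by simp
  have st: "sin t < 0" using sin_lt_zero t by auto
  have key: "dG (sector t) x \<le> cmod (u - c)" if "inC t c" for c
  proof -
    have "inC t (z + c)" using inC_add z that by blast
    then have "z + c \<notin> sector t" using sector_iff[OF t] by blast
    then have "dG (sector t) x \<le> cmod (x - (z + c))" by (rule dG_le[OF x])
    then show ?thesis by (simp add: u_def algebra_simps)
  qed
  have "dG (sector t) x \<le> r * g t a"
  proof (cases "a \<le> pi/2")
    case True
    have ca: "0 \<le> cos a" using True a by (intro cos_ge_zero) auto
    have sa: "0 \<le> sin a" using True a by (intro sin_ge_zero) auto
    define c where "c = complex_of_real (r * cos a)"
    have "inC t c" unfolding inC_def c_def using st ca r0
      by (simp add: mult_nonneg_nonneg mult_nonpos_nonneg)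
    then have "dG (sector t) x \<le> cmod (u - c)" by (rule key)
    moreover have "u - c = \<i> * complex_of_real (r * sin a)"
      by (simp add: complex_eq_iff re im c_def)
    moreover have "cmod (\<i> * complex_of_real (r * sin a)) = r * sin a"
      using r0 sa by (simp add: norm_mult)
    ultimately show ?thesis using True by (simp add: g_def)
  next
    case False
    show ?thesis
    proof (cases "t - a \<le> pi/2")
      case True
      have ca: "0 \<le> cos (t - a)" using True a by (intro cos_ge_zero) auto
      have sa: "0 \<le> sin (t - a)" using True a t by (intro sin_ge_zero) auto
      define c where "c = Complex (r * cos (t - a) * cos t) (r * cos (t - a) * sin t)"
      have "inC t c" unfolding inC_def c_def using st ca r0
        by (simp add: mult_nonneg_nonneg mult_nonpos_nonneg mult_nonneg_nonpos algebra_simps)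
      then have "dG (sector t) x \<le> cmod (u - c)" by (rule key)
      moreover have "u - c = complex_of_real (r * sin (t - a)) * Complex (sin t) (- cos t)"
      proof -
        have h: "cos t * cos t + sin t * sin t = 1" by (rule sin_cos_squared_add3)
        have e1: "r * cos a - r * cos (t - a) * cos t - r * sin (t - a) * sin t
                 = r * cos a * (1 - (cos t * cos t + sin t * sin t))"
          unfolding cos_diff sin_diff by (rule alg1)
        have e2: "r * sin a - r * cos (t - a) * sin t + r * sin (t - a) * cos t
                 = r * sin a * (1 - (cos t * cos t + sin t * sin t))"
          unfolding cos_diff sin_diff by (rule alg2)
        have e1': "r * cos a - r * cos (t - a) * cos t - r * sin (t - a) * sin t = 0" using e1 h by simp
        have e2': "r * sin a - r * cos (t - a) * sin t + r * sin (t - a) * cos t = 0" using e2 h by simp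
        have r1: "Re (u - c) = r * cos a - r * cos (t - a) * cos t" by (simp add: re c_def)
        have r2: "Re (complex_of_real (r * sin (t - a)) * Complex (sin t) (- cos t)) = r * sin (t - a) * sin t"
          by simp
        have i1: "Im (u - c) = r * sin a - r * cos (t - a) * sin t" by (simp add: im c_def)
        have i2: "Im (complex_of_real (r * sin (t - a)) * Complex (sin t) (- cos t)) = - (r * sin (t - a) * cos t)"
          by simp
        have "Re (u - c) = Re (complex_of_real (r * sin (t - a)) * Complex (sin t) (- cos t))"
          using e1' r1 r2 by linarith
        moreover have "Im (u - c) = Im (complex_of_real (r * sin (t - a)) * Complex (sin t) (- cos t))"
          using e2' i1 i2 by linarith
        ultimately show ?thesis by (simp add: complex_eq_iff)
      qed
      moreover have "cmod (Complex (sin t) (- cos t)) = 1"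
        by (simp add: cmod_def)
      moreover have "cmod (complex_of_real (r * sin (t - a))) = r * sin (t - a)"
        unfolding norm_of_real using r0 sa by simp
      ultimately show ?thesis using True False by (simp add: g_def norm_mult)
    next
      case False2: False
      have "inC t 0" by (simp add: inC_def)
      then have "dG (sector t) x \<le> cmod (u - 0)" by (rule key)
      then show ?thesis using False False2 r_def by (simp add: g_def)
    qed
  qed
  then show ?thesis using a a_def r_def u_def by simp
qed


lemma alg3: "(r * ca - p * cb)^2 + (r * sa - p * sb)^2
   = r^2 * (ca^2 + sa^2) + p^2 * (cb^2 + sb^2) - 2 * r * p * (ca * cb + sa * sb::real)"
  by (simp add: power2_eq_square algebra_simps)

lemma main_ineq:
  assumes t: "pi < t" "t < 2*pi" and x: "x \<in> sector t" and y: "y \<in> sector t" and z: "inC t z"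
  shows "(cmod (x - y))^2 + 4 * dG (sector t) x * dG (sector t) y
         \<le> (1 - cos (t/2)) * (cmod (x - z) + cmod (z - y))^2"
proof -
  define u where "u = x - z"
  define v where "v = y - z"
  define a where "a = Arg2pi u"
  define b where "b = Arg2pi v"
  define r where "r = cmod u"
  define p where "p = cmod v"
  define dx where "dx = dG (sector t) x"
  define dy where "dy = dG (sector t) y"
  define c where "c = cos (t/2)"
  have bx: "0 < a" "a < t" "dx \<le> r * g t a"
    using dG_bound[OF t x z] unfolding a_def u_def r_def dx_def by auto
  have by': "0 < b" "b < t" "dy \<le> p * g t b"
    using dG_bound[OF t y z] unfolding b_def v_def p_def dy_def by auto
  have fne: "frontier (sector t) \<noteq> {}" using zero_frontier[OF t] by blast
  have dx0: "0 \<le> dx" and dy0: "0 \<le> dy" using dG_nonneg[OF fne] dx_def dy_def by auto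
  have u0: "u \<noteq> 0" using bx a_def by auto
  have v0: "v \<noteq> 0" using by' b_def by auto
  have r0: "0 \<le> r" and p0: "0 \<le> p" using r_def p_def by auto
  have xy: "x - y = u - v" by (simp add: u_def v_def)
  have "(cmod (u - v))^2 = (Re u - Re v)^2 + (Im u - Im v)^2" by (simp add: cmod_power2)
  also have "\<dots> = (r * cos a - p * cos b)^2 + (r * sin a - p * sin b)^2"
    using polar[OF u0] polar[OF v0] a_def b_def r_def p_def by simp
  also have "\<dots> = r^2 + p^2 - 2 * r * p * cos (a - b)"
    unfolding alg3 sin_cos_squared_add2 cos_diff by simp
  finally have nd: "(cmod (x - y))^2 = r^2 + p^2 - 2 * r * p * cos (a - b)" using xy by simp
  have "dx * dy \<le> (r * g t a) * (p * g t b)"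
    by (rule mult_mono) (use bx by' dx0 dy0 in linarith)+
  then have dd: "4 * dx * dy \<le> 4 * (r * p * (g t a * g t b))" by (simp add: algebra_simps)
  have T: "2 * g t a * g t b - cos (a - b) \<le> 1 - 2 * c"
    using trig_main[OF t bx(1,2) by'(1,2)] c_def by simp
  have rp: "0 \<le> r * p" using r0 p0 by simp
  have "r * p * (2 * g t a * g t b - cos (a - b)) \<le> r * p * (1 - 2 * c)"
    by (rule mult_left_mono[OF T rp])
  then have T2: "4 * (r * p * (g t a * g t b)) - 2 * r * p * cos (a - b) \<le> 2 * (r * p) * (1 - 2 * c)"
    by (simp add: algebra_simps)
  have c0: "c \<le> 0"
  proof -
    have "cos (t/2) \<le> cos (pi/2)" by (rule cos_monotone_0_pi_le) (use t in auto)
    then show ?thesis using c_def by simp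
  qed
  have sq: "0 \<le> (-c) * (r - p)^2" using c0 by (intro mult_nonneg_nonneg) auto
  have fin: "r^2 + p^2 + 2 * (r * p) * (1 - 2 * c) + (-c) * (r - p)^2 = (1 - c) * (r + p)^2"
    by (simp add: power2_eq_square algebra_simps)
  have e: "cmod (x - z) = r" "cmod (z - y) = p" using u_def r_def v_def p_def by (auto simp: norm_minus_commute)
  show ?thesis unfolding e dx_def[symmetric] dy_def[symmetric] c_def[symmetric]
    using nd dd T2 sq fin by linarith
qed


lemma lin_le: "cos t * Im z - sin t * Re z \<le> cmod z"
proof -
  have "(cos t * Im z + (- sin t) * Re z)^2 \<le> ((cos t)^2 + (- sin t)^2) * ((Im z)^2 + (Re z)^2)"
    by (rule cs2)
  also have "\<dots> = (cmod z)^2" by (simp add: cmod_power2)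
  finally have "(cos t * Im z - sin t * Re z)^2 \<le> (cmod z)^2" by simp
  then show ?thesis by (rule power2_le_imp_le) simp
qed

lemma cmod_cis: "cmod (Complex (cos u) (sin u)) = 1"
  by (simp add: cmod_def)

theorem theorem3p10:
  fixes \<theta> :: real
  assumes "pi < \<theta>" and "\<theta> < 2 * pi"
  shows "(\<forall>x\<in>sector \<theta>. \<forall>y\<in>sector \<theta>.
            sG (sector \<theta>) x y \<le> sqrt 2 * sin (\<theta> / 4) * pG (sector \<theta>) x y)
       \<and> (\<forall>c < sqrt 2 * sin (\<theta> / 4). \<exists>x\<in>sector \<theta>. \<exists>y\<in>sector \<theta>.
            c * pG (sector \<theta>) x y < sG (sector \<theta>) x y)"
proof -
  note t = assms
  define K where "K = sqrt 2 * sin (\<theta> / 4)"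
  define S4 where "S4 = sin (\<theta> / 4)"
  have s4: "0 < S4" unfolding S4_def by (rule sin_gt_zero) (use t in auto)
  have K0: "0 < K" using s4 by (simp add: K_def S4_def)
  have h2: "\<theta> / 2 = 2 * (\<theta> / 4)" by simp
  have c2: "cos (\<theta>/2) = 1 - 2 * S4^2" unfolding h2 S4_def by (rule cos_double_sin)
  have KS: "K^2 = 2 * S4^2" by (simp add: K_def S4_def power_mult_distrib)
  have K2: "K^2 = 1 - cos (\<theta>/2)" using KS c2 by simp
  have z0: "0 \<in> frontier (sector \<theta>)" by (rule zero_frontier[OF t])
  have fne: "frontier (sector \<theta>) \<noteq> {}" using z0 by blast
  have P1: "\<forall>x\<in>sector \<theta>. \<forall>y\<in>sector \<theta>. sG (sector \<theta>) x y \<le> K * pG (sector \<theta>) x y"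
  proof (intro ballI)
    fix x y assume x: "x \<in> sector \<theta>" and y: "y \<in> sector \<theta>"
    show "sG (sector \<theta>) x y \<le> K * pG (sector \<theta>) x y"
    proof (cases "x = y")
      case True then show ?thesis by (simp add: sG_def pG_def)
    next
      case False
      define D where "D = cmod (x - y)"
      define dx where "dx = dG (sector \<theta>) x"
      define dy where "dy = dG (sector \<theta>) y"
      define Q where "Q = sqrt (D^2 + 4 * dx * dy)"
      define E where "E = {cmod (x - z) + cmod (z - y) |z. z \<in> frontier (sector \<theta>)}"
      have D0: "0 < D" using False D_def by simp
      have dx0: "0 \<le> dx" and dy0: "0 \<le> dy" using dG_nonneg[OF fne] dx_def dy_def by auto
      have dd0: "0 \<le> 4 * dx * dy" using dx0 dy0 by simp
      have Q0: "0 < Q" unfolding Q_def using D0 dd0 by (intro real_sqrt_gt_zero) (simp add: add_pos_nonneg)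
      have Q2: "Q^2 = D^2 + 4 * dx * dy" unfolding Q_def using dd0 by (intro real_sqrt_pow2) simp
      have QE: "Q / K \<le> e" if eE: "e \<in> E" for e
      proof -
        obtain z where z: "z \<in> frontier (sector \<theta>)" "e = cmod (x - z) + cmod (z - y)"
          using eE E_def by blast
        have iz: "inC \<theta> z" by (rule frontier_inC[OF t z(1)])
        have m: "D^2 + 4 * dx * dy \<le> K^2 * e^2"
          using main_ineq[OF t x y iz] unfolding K2 z(2) D_def dx_def dy_def by simp
        have e0: "0 \<le> e" using z(2) by simp
        have "Q \<le> K * e"
          by (rule power2_le_imp_le) (use m Q2 K0 e0 in \<open>simp_all add: power_mult_distrib\<close>)
        then show ?thesis using K0 by (simp add: pos_divide_le_eq mult.commute)
      qed
      have Ene: "E \<noteq> {}" using fne E_def by blast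
      have I: "Q / K \<le> Inf E" by (rule cInf_greatest[OF Ene]) (rule QE)
      have QK0: "0 < Q / K" using Q0 K0 by simp
      have IP: "0 < Inf E" using I QK0 by linarith
      have pp: "0 < Inf E * (Q / K)" using IP QK0 by (rule mult_pos_pos)
      have "sG (sector \<theta>) x y = D / Inf E" by (simp add: sG_def D_def E_def)
      also have "\<dots> \<le> D / (Q / K)"
        by (rule divide_left_mono[OF I _ pp]) (use D0 in simp)
      also have "\<dots> = K * (D / Q)" using Q0 K0 by (simp add: field_simps)
      also have "D / Q = pG (sector \<theta>) x y" by (simp add: pG_def D_def Q_def dx_def dy_def)
      finally show ?thesis .
    qed
  qed
  have P2: "\<forall>c < K. \<exists>x\<in>sector \<theta>. \<exists>y\<in>sector \<theta>. c * pG (sector \<theta>) x y < sG (sector \<theta>) x y"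
  proof (intro allI impI)
    fix c assume cK: "c < K"
    define x0 where "x0 = Complex (cos (\<theta>/4)) (sin (\<theta>/4))"
    define y0 where "y0 = Complex (cos (3*\<theta>/4)) (sin (3*\<theta>/4))"
    have ly: "cos \<theta> * Im y0 - sin \<theta> * Re y0 = - S4"
    proof -
      have "sin (3*\<theta>/4 - \<theta>) = sin (3*\<theta>/4) * cos \<theta> - cos (3*\<theta>/4) * sin \<theta>" by (rule sin_diff)
      moreover have "3*\<theta>/4 - \<theta> = - (\<theta>/4)" by simp
      ultimately show ?thesis by (simp add: y0_def S4_def algebra_simps)
    qed
    have x0s: "x0 \<in> sector \<theta>" using sector_iff[OF t] s4 by (simp add: inC_def x0_def S4_def)
    have y0s: "y0 \<in> sector \<theta>" using sector_iff[OF t] s4 ly by (simp add: inC_def)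
    define dx where "dx = dG (sector \<theta>) x0"
    define dy where "dy = dG (sector \<theta>) y0"
    have dx: "S4 \<le> dx" unfolding dx_def dG_def
    proof (rule cInf_greatest)
      show "{cmod (x0 - z) |z. z \<in> frontier (sector \<theta>)} \<noteq> {}" using fne by blast
    next
      fix e assume "e \<in> {cmod (x0 - z) |z. z \<in> frontier (sector \<theta>)}"
      then obtain w where w: "w \<in> frontier (sector \<theta>)" "e = cmod (x0 - w)" by blast
      have "Im w \<le> 0" using frontier_inC[OF t w(1)] by (simp add: inC_def)
      moreover have "\<bar>Im (x0 - w)\<bar> \<le> cmod (x0 - w)" by (rule abs_Im_le_cmod)
      ultimately show "S4 \<le> e" using w(2) by (simp add: x0_def S4_def)
    qed
    have dy: "S4 \<le> dy" unfolding dy_def dG_def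
    proof (rule cInf_greatest)
      show "{cmod (y0 - z) |z. z \<in> frontier (sector \<theta>)} \<noteq> {}" using fne by blast
    next
      fix e assume "e \<in> {cmod (y0 - z) |z. z \<in> frontier (sector \<theta>)}"
      then obtain w where w: "w \<in> frontier (sector \<theta>)" "e = cmod (y0 - w)" by blast
      have "0 \<le> cos \<theta> * Im w - sin \<theta> * Re w" using frontier_inC[OF t w(1)] by (simp add: inC_def)
      moreover have "cos \<theta> * Im (w - y0) - sin \<theta> * Re (w - y0) \<le> cmod (w - y0)" by (rule lin_le)
      moreover have "cos \<theta> * Im (w - y0) - sin \<theta> * Re (w - y0)
          = (cos \<theta> * Im w - sin \<theta> * Re w) - (cos \<theta> * Im y0 - sin \<theta> * Re y0)"
        by (simp add: algebra_simps)
      ultimately show "S4 \<le> e" using w(2) ly by (simp add: norm_minus_commute)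
    qed
    define D where "D = cmod (x0 - y0)"
    have "D^2 = (1 * cos (\<theta>/4) - 1 * cos (3*\<theta>/4))^2 + (1 * sin (\<theta>/4) - 1 * sin (3*\<theta>/4))^2"
      by (simp add: D_def cmod_power2 x0_def y0_def)
    also have "\<dots> = 2 - 2 * cos (\<theta>/4 - 3*\<theta>/4)"
      unfolding alg3 sin_cos_squared_add2 cos_diff by simp
    also have "\<theta>/4 - 3*\<theta>/4 = - (\<theta>/2)" by simp
    finally have "D^2 = 2 - 2 * cos (\<theta>/2)" by simp
    then have "D^2 = (2 * S4)^2" using c2 by (simp add: power_mult_distrib)
    then have D: "D = 2 * S4" by (rule power2_eq_imp_eq) (use s4 D_def in auto)
    define E where "E = {cmod (x0 - z) + cmod (z - y0) |z. z \<in> frontier (sector \<theta>)}"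
    have Ene: "E \<noteq> {}" using fne E_def by blast
    have IE: "D \<le> Inf E"
    proof (rule cInf_greatest[OF Ene])
      fix e assume "e \<in> E"
      then obtain z where z: "e = cmod (x0 - z) + cmod (z - y0)" using E_def by blast
      have "cmod ((x0 - z) + (z - y0)) \<le> cmod (x0 - z) + cmod (z - y0)" by (rule norm_triangle_ineq)
      then show "D \<le> e" using z by (simp add: D_def)
    qed
    have IE2: "Inf E \<le> 2"
    proof -
      have "cmod (x0 - 0) + cmod (0 - y0) \<in> E" using z0 E_def by blast
      moreover have "cmod (x0 - 0) + cmod (0 - y0) = 2" by (simp add: x0_def y0_def cmod_cis)
      moreover have "bdd_below E" unfolding E_def by (auto intro!: bdd_belowI[of _ 0])
      ultimately show ?thesis using cInf_lower by metis
    qed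
    have D0: "0 < D" using D s4 by simp
    have sG: "S4 \<le> sG (sector \<theta>) x0 y0"
    proof -
      have "sG (sector \<theta>) x0 y0 = D / Inf E" by (simp add: sG_def D_def E_def)
      moreover have "D / 2 \<le> D / Inf E"
      proof -
        have IP: "0 < Inf E" using IE D0 by linarith
        have pp: "0 < 2 * Inf E" using IP by simp
        show ?thesis by (rule divide_left_mono[OF IE2 _ pp]) (use D0 in simp)
      qed
      ultimately show ?thesis using D by simp
    qed
    define Q where "Q = sqrt (D^2 + 4 * dx * dy)"
    have dd: "S4 * S4 \<le> dx * dy" using dx dy s4 by (intro mult_mono) auto
    have dd0: "0 \<le> 4 * dx * dy" using dd s4
      by (metis mult_nonneg_nonneg less_eq_real_def order_trans mult.assoc zero_le_numeral)
    have Q0: "0 < Q" unfolding Q_def using D0 dd0 by (intro real_sqrt_gt_zero) (simp add: add_pos_nonneg)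
    have Q2: "Q^2 = D^2 + 4 * dx * dy" unfolding Q_def using dd0 by (intro real_sqrt_pow2) simp
    have pG: "pG (sector \<theta>) x0 y0 = D / Q" by (simp add: pG_def D_def Q_def dx_def dy_def)
    have "K * D \<le> S4 * Q"
    proof (rule power2_le_imp_le)
      have "(K * D)^2 = 8 * S4^2 * S4^2" by (simp add: power_mult_distrib KS D)
      also have "\<dots> \<le> S4^2 * (4 * S4^2 + 4 * (dx * dy))"
        using dd s4 by (simp add: power2_eq_square algebra_simps mult_left_mono)
      also have "\<dots> = (S4 * Q)^2" by (simp add: power_mult_distrib Q2 D algebra_simps)
      finally show "(K * D)^2 \<le> (S4 * Q)^2" .
      show "0 \<le> S4 * Q" using s4 Q0 by simp
    qed
    then have KP: "K * pG (sector \<theta>) x0 y0 \<le> S4" using Q0 unfolding pG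
      by (simp add: pos_divide_le_eq mult.commute mult.left_commute)
    have pos: "0 < pG (sector \<theta>) x0 y0" unfolding pG using D0 Q0 by simp
    have "c * pG (sector \<theta>) x0 y0 < K * pG (sector \<theta>) x0 y0" using cK pos by simp
    then have "c * pG (sector \<theta>) x0 y0 < sG (sector \<theta>) x0 y0" using KP sG by linarith
    then show "\<exists>x\<in>sector \<theta>. \<exists>y\<in>sector \<theta>. c * pG (sector \<theta>) x y < sG (sector \<theta>) x y"
      using x0s y0s by blast
  qed
  show ?thesis using P1 P2 unfolding K_def by blast
qed

end
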